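(* Let $N:\Sigma\to c(X)$ be a multimeasure satisfying the countable chain condition. Then there is an at most countable family $\{x'_n:n\in\mathbb N\}\subseteq X'$ such that $$\bigcap_n \mathcal N[s(x'_n,N)]=\bigcap_{x'\in X'}\mathcal N[s(x',N)].$$
   Context: $(\Omega,\Sigma)$ is a measurable space and $X$ is a Hausdorff locally convex space with dual $X'$. $c(X)$ is the family of nonempty closed convex subsets of $X$; $s(x',C)=\sup\{\langle x',x\rangle:x\in C\}$. A multimeasure is a map $M:\Sigma\to c(X)$ such that for every $x'\in X'$ the set function $s(x',M(\cdot))$ is a $\sigma$-finite countably additive measure with values in $(-\infty,+\infty]$. $\mathcal N(N)=\{E\in\Sigma:N(E)=\{0\}\}$; $N$ satisfies the countable chain condition if every family of pairwise disjoint sets in $\Sigma\setminus\mathcal N(N)$ is at most countable. For a measure $\nu:\Sigma\to(-\infty,+\infty]$, $\mathcal N[\nu]=\{E\in\Sigma:\nu(F)=0\text{ for all }F\in\Sigma,\ F\subseteq E\}$. *)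

theory Defs
  imports "HOL-Analysis.Analysis"
begin

class locally_convex_space = real_vector + t2_space +
  assumes continuous_add_lcs: "\<And>x y::'a. filterlim (\<lambda>p. fst p + snd p) (nhds (x + y)) (nhds x \<times>\<^sub>F nhds y)"
  assumes continuous_scaleR_lcs: "\<And>(r::real) (x::'a). filterlim (\<lambda>p. fst p *\<^sub>R snd p) (nhds (r *\<^sub>R x)) (nhds r \<times>\<^sub>F nhds x)"
  assumes locally_convex:
    "\<And>U. open U \<Longrightarrow> (0::'a) \<in> U \<Longrightarrow> \<exists>V. open V \<and> 0 \<in> V \<and> V \<subseteq> U \<and>
       (\<forall>x\<in>V. \<forall>y\<in>V. \<forall>u v::real. 0 \<le> u \<longrightarrow> 0 \<le> v \<longrightarrow> u + v = 1 \<longrightarrow> u *\<^sub>R x + v *\<^sub>R y \<in> V)"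

definition dual_space :: "('a::locally_convex_space \<Rightarrow> real) set" where
  "dual_space = {f. linear f \<and> continuous_on UNIV f}"

definition cc_sets :: "'a::locally_convex_space set set" where
  "cc_sets = {C. C \<noteq> {} \<and> closed C \<and> convex C}"

definition supp_fun :: "('a \<Rightarrow> real) \<Rightarrow> 'a set \<Rightarrow> ereal" where
  "supp_fun f C = (SUP x\<in>C. ereal (f x))"

definition sf_ext_measure :: "'w measure \<Rightarrow> ('w set \<Rightarrow> ereal) \<Rightarrow> bool" where
  "sf_ext_measure M \<nu> \<longleftrightarrow>
     \<nu> {} = 0 \<and> (\<forall>E\<in>sets M. \<nu> E \<noteq> -\<infinity>) \<and>
     (\<forall>A::nat \<Rightarrow> 'w set. range A \<subseteq> sets M \<longrightarrow> disjoint_family A \<longrightarrow>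
         (\<lambda>n. \<nu> (A n)) sums \<nu> (\<Union>n. A n)) \<and>
     (\<exists>A::nat \<Rightarrow> 'w set. range A \<subseteq> sets M \<and> (\<Union>n. A n) = space M \<and> (\<forall>n. \<nu> (A n) < \<infinity>))"

definition multimeasure :: "'w measure \<Rightarrow> ('w set \<Rightarrow> 'a::locally_convex_space set) \<Rightarrow> bool" where
  "multimeasure M N \<longleftrightarrow>
     (\<forall>E\<in>sets M. N E \<in> cc_sets) \<and>
     (\<forall>f\<in>dual_space. sf_ext_measure M (\<lambda>E. supp_fun f (N E)))"

definition null_sets_mm :: "'w measure \<Rightarrow> ('w set \<Rightarrow> 'a::locally_convex_space set) \<Rightarrow> 'w set set" where
  "null_sets_mm M N = {E\<in>sets M. N E = {0}}"

definition countable_chain_condition ::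
  "'w measure \<Rightarrow> ('w set \<Rightarrow> 'a::locally_convex_space set) \<Rightarrow> bool" where
  "countable_chain_condition M N \<longleftrightarrow>
     (\<forall>F. F \<subseteq> sets M - null_sets_mm M N \<longrightarrow> disjoint F \<longrightarrow> countable F)"

definition null_sets_meas :: "'w measure \<Rightarrow> ('w set \<Rightarrow> ereal) \<Rightarrow> 'w set set" where
  "null_sets_meas M \<nu> = {E\<in>sets M. \<forall>F\<in>sets M. F \<subseteq> E \<longrightarrow> \<nu> F = 0}"

end

theory Submission
  imports Defs
begin

lemma maximal_disjoint:
  "\<exists>W. W \<subseteq> Collect P \<and> disjoint W \<and> (\<forall>X. P X \<longrightarrow> (\<forall>w\<in>W. w \<inter> X = {}) \<longrightarrow> X \<in> W)"
proof -
  let ?A = "{W. W \<subseteq> Collect P \<and> disjoint W}"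
  have "\<forall>C\<in>chains ?A. \<Union>C \<in> ?A"
  proof
    fix C assume C: "C \<in> chains ?A"
    have "\<Union>C \<subseteq> Collect P" using C by (auto simp: chains_def)
    moreover have "disjoint (\<Union>C)"
      unfolding disjoint_def
    proof (intro ballI impI)
      fix a b assume a: "a \<in> \<Union>C" and b: "b \<in> \<Union>C" and ab: "a \<noteq> b"
      then obtain W1 W2 where W: "W1 \<in> C" "W2 \<in> C" "a \<in> W1" "b \<in> W2" by auto
      have "W1 \<subseteq> W2 \<or> W2 \<subseteq> W1" using C W by (auto simp: chains_def chain_subset_def)
      moreover have "disjoint W1" "disjoint W2" using C W by (auto simp: chains_def)
      ultimately show "a \<inter> b = {}" using W ab unfolding disjoint_def by blast
    qed
    ultimately show "\<Union>C \<in> ?A" by simp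
  qed
  from Zorn_Lemma[OF this] obtain W where W: "W \<in> ?A" and max: "\<forall>X\<in>?A. W \<subseteq> X \<longrightarrow> X = W"
    by blast
  have "\<forall>X. P X \<longrightarrow> (\<forall>w\<in>W. w \<inter> X = {}) \<longrightarrow> X \<in> W"
  proof (intro allI impI)
    fix X assume PX: "P X" and d: "\<forall>w\<in>W. w \<inter> X = {}"
    have "insert X W \<in> ?A" using W PX d unfolding disjoint_def by auto
    with max have "insert X W = W" by blast
    then show "X \<in> W" by blast
  qed
  with W show ?thesis by blast
qed

lemma abstract_ccc:
  fixes M :: "'w measure" and I :: "'i \<Rightarrow> 'w set set" and D :: "'i set"
  assumes Dne: "D \<noteq> {}"
    and Isub: "\<And>\<alpha>. \<alpha> \<in> D \<Longrightarrow> I \<alpha> \<subseteq> sets M"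
    and down: "\<And>\<alpha> A B. \<alpha> \<in> D \<Longrightarrow> A \<in> I \<alpha> \<Longrightarrow> B \<in> sets M \<Longrightarrow> B \<subseteq> A \<Longrightarrow> B \<in> I \<alpha>"
    and un: "\<And>\<alpha> C. \<alpha> \<in> D \<Longrightarrow> countable C \<Longrightarrow> C \<subseteq> I \<alpha> \<Longrightarrow> \<Union>C \<in> I \<alpha>"
    and ccc: "\<And>F. F \<subseteq> sets M - (\<Inter>\<alpha>\<in>D. I \<alpha>) \<Longrightarrow> disjoint F \<Longrightarrow> countable F"
  shows "\<exists>A. countable A \<and> A \<subseteq> D \<and> A \<noteq> {} \<and> (\<Inter>\<alpha>\<in>A. I \<alpha>) = (\<Inter>\<alpha>\<in>D. I \<alpha>)"
proof -
  define J where "J = (\<Inter>\<alpha>\<in>D. I \<alpha>)"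
  have emp: "{} \<in> I \<alpha>" if "\<alpha> \<in> D" for \<alpha> using un[OF that, of "{}"] by simp
  have empJ: "{} \<in> J" using emp unfolding J_def by blast
  define Hom where "Hom H \<alpha> \<longleftrightarrow> H \<in> sets M \<and> \<alpha> \<in> D \<and> H \<notin> I \<alpha> \<and>
     (\<forall>H'\<in>sets M. H' \<subseteq> H \<longrightarrow> H' \<in> I \<alpha> \<longrightarrow> H' \<in> J)" for H \<alpha>
  have dense: "\<exists>H. H \<subseteq> G \<and> Hom H \<alpha>" if G: "G \<in> sets M" and a: "\<alpha> \<in> D" and nG: "G \<notin> I \<alpha>" for G \<alpha>
  proof -
    obtain W where W: "W \<subseteq> {X. X \<in> sets M \<and> X \<subseteq> G \<and> X \<in> I \<alpha> \<and> X \<notin> J}" and dW: "disjoint W"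
      and mW: "\<forall>X. (X \<in> sets M \<and> X \<subseteq> G \<and> X \<in> I \<alpha> \<and> X \<notin> J) \<longrightarrow> (\<forall>w\<in>W. w \<inter> X = {}) \<longrightarrow> X \<in> W"
      using maximal_disjoint[of "\<lambda>X. X \<in> sets M \<and> X \<subseteq> G \<and> X \<in> I \<alpha> \<and> X \<notin> J"] by auto
    have "W \<subseteq> sets M - J" using W by auto
    then have cW: "countable W" using ccc[OF _ dW] unfolding J_def by blast
    have UW: "\<Union>W \<in> I \<alpha>" using un[OF a cW] W by auto
    have UWs: "\<Union>W \<in> sets M" using UW Isub[OF a] by auto
    define H where "H = G - \<Union>W"
    have Hs: "H \<in> sets M" using G UWs unfolding H_def by auto
    have nH: "H \<notin> I \<alpha>"
    proof
      assume "H \<in> I \<alpha>"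
      then have "\<Union>{H, \<Union>W} \<in> I \<alpha>" using un[OF a, of "{H, \<Union>W}"] UW by auto
      then have "G \<in> I \<alpha>" using down[OF a _ G] unfolding H_def by auto
      with nG show False by simp
    qed
    have "Hom H \<alpha>" unfolding Hom_def
    proof (intro conjI Hs a nH ballI impI)
      fix H' assume H's: "H' \<in> sets M" and H'H: "H' \<subseteq> H" and H'I: "H' \<in> I \<alpha>"
      show "H' \<in> J"
      proof (rule ccontr)
        assume nJ: "H' \<notin> J"
        have "\<forall>w\<in>W. w \<inter> H' = {}" using H'H unfolding H_def by auto
        with mW H's H'H H'I nJ have "H' \<in> W" unfolding H_def by auto
        then have "H' = {}" using H'H unfolding H_def by auto
        with nJ empJ show False by simp
      qed
    qed
    then show ?thesis unfolding H_def by blast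
  qed
  obtain \<F> where F: "\<F> \<subseteq> {F. \<exists>\<alpha>. Hom F \<alpha>}" and dF: "disjoint \<F>"
    and mF: "\<forall>X. (\<exists>\<alpha>. Hom X \<alpha>) \<longrightarrow> (\<forall>w\<in>\<F>. w \<inter> X = {}) \<longrightarrow> X \<in> \<F>"
    using maximal_disjoint[of "\<lambda>F. \<exists>\<alpha>. Hom F \<alpha>"] by auto
  have FnJ: "F \<notin> J" "F \<in> sets M" if "F \<in> \<F>" for F
    using F that unfolding Hom_def J_def by auto
  have "\<F> \<subseteq> sets M - J" using FnJ by auto
  then have cF: "countable \<F>" using ccc[OF _ dF] unfolding J_def by blast
  define a where "a F = (SOME \<alpha>. Hom F \<alpha>)" for F
  have aH: "Hom F (a F)" if "F \<in> \<F>" for F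
    using F that unfolding a_def by (auto intro: someI_ex)
  obtain \<alpha>0 where a0: "\<alpha>0 \<in> D" using Dne by blast
  define A where "A = insert \<alpha>0 (a ` \<F>)"
  have AD: "A \<subseteq> D" using aH a0 unfolding A_def Hom_def by auto
  have cA: "countable A" using cF unfolding A_def by auto
  define U where "U = \<Union>\<F>"
  have Us: "U \<in> sets M" unfolding U_def using cF FnJ by (intro sets.countable_Union) auto
  have compl: "space M - U \<in> J"
  proof (rule ccontr)
    assume "space M - U \<notin> J"
    then obtain \<alpha> where al: "\<alpha> \<in> D" "space M - U \<notin> I \<alpha>" unfolding J_def by auto
    from dense[OF _ al] Us obtain H where H: "H \<subseteq> space M - U" "Hom H \<alpha>" by auto
    have "\<forall>w\<in>\<F>. w \<inter> H = {}" using H(1) unfolding U_def by auto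
    with mF H have "H \<in> \<F>" by blast
    then have "H = {}" using H(1) unfolding U_def by auto
    with H(2) emp show False unfolding Hom_def by auto
  qed
  have "(\<Inter>\<alpha>\<in>A. I \<alpha>) \<subseteq> J"
  proof
    fix E assume E: "E \<in> (\<Inter>\<alpha>\<in>A. I \<alpha>)"
    have Es: "E \<in> sets M" using E Isub[OF a0] unfolding A_def by auto
    have EF: "E \<inter> F \<in> J" if "F \<in> \<F>" for F
    proof -
      have e1: "E \<in> I (a F)" using E that unfolding A_def by auto
      have e2: "a F \<in> D" using aH[OF that] unfolding Hom_def by auto
      have e3: "E \<inter> F \<in> sets M" using Es FnJ(2)[OF that] by auto
      have "E \<inter> F \<in> I (a F)" using down[OF e2 e1 e3] by blast
      then show ?thesis using aH[OF that] Es FnJ(2)[OF that] unfolding Hom_def by auto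
    qed
    show "E \<in> J" unfolding J_def
    proof
      fix \<alpha> assume al: "\<alpha> \<in> D"
      have d1: "E - U \<in> sets M" using Es Us by auto
      have d2: "E - U \<subseteq> space M - U" using sets.sets_into_space[OF Es] by auto
      have d3: "space M - U \<in> I \<alpha>" using compl al unfolding J_def by auto
      have "E - U \<in> I \<alpha>" using down[OF al d3 d1 d2] .
      moreover have "E \<inter> F \<in> I \<alpha>" if "F \<in> \<F>" for F using EF[OF that] al unfolding J_def by auto
      ultimately have "\<Union>(insert (E - U) ((\<lambda>F. E \<inter> F) ` \<F>)) \<in> I \<alpha>"
        using cF by (intro un[OF al]) auto
      moreover have "\<Union>(insert (E - U) ((\<lambda>F. E \<inter> F) ` \<F>)) = E" unfolding U_def by auto
      ultimately show "E \<in> I \<alpha>" by simp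
    qed
  qed
  moreover have "J \<subseteq> (\<Inter>\<alpha>\<in>A. I \<alpha>)" using AD unfolding J_def by auto
  ultimately have eqA: "(\<Inter>\<alpha>\<in>A. I \<alpha>) = (\<Inter>\<alpha>\<in>D. I \<alpha>)" unfolding J_def by (rule subset_antisym)
  have Ane: "A \<noteq> {}" unfolding A_def by simp
  show ?thesis by (rule exI[of _ A]) (intro conjI cA AD Ane eqA)
qed

theorem lemma3p3:
  fixes M :: "'w measure" and N :: "'w set \<Rightarrow> 'a::locally_convex_space set"
  assumes "multimeasure M N"
    and "countable_chain_condition M N"
  shows "\<exists>x' :: nat \<Rightarrow> ('a \<Rightarrow> real). range x' \<subseteq> dual_space \<and>
           (\<Inter>n. null_sets_meas M (\<lambda>E. supp_fun (x' n) (N E)))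
             = (\<Inter>f\<in>dual_space. null_sets_meas M (\<lambda>E. supp_fun f (N E)))"
proof -
  define I where "I f = null_sets_meas M (\<lambda>E. supp_fun f (N E))" for f :: "'a \<Rightarrow> real"
  have sf: "sf_ext_measure M (\<lambda>E. supp_fun f (N E))" if "f \<in> dual_space" for f
    using assms(1) that unfolding multimeasure_def by auto
  have zero: "supp_fun f (N {}) = 0" if "f \<in> dual_space" for f
    using sf[OF that] unfolding sf_ext_measure_def by (rule conjunct1)
  have Dne: "dual_space \<noteq> ({} :: ('a \<Rightarrow> real) set)"
  proof -
    have "(\<lambda>x::'a. 0::real) \<in> dual_space" unfolding dual_space_def by (auto intro: linear_zero)
    then show ?thesis by blast
  qed
  have un: "\<Union>C \<in> I f" if f: "f \<in> dual_space" and cC: "countable C" and CI: "C \<subseteq> I f" for f C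
  proof (cases "C = {}")
    case True
    then show ?thesis using zero[OF f] unfolding I_def null_sets_meas_def by auto
  next
    case False
    define e where "e = from_nat_into C"
    have rC: "range e = C" unfolding e_def using range_from_nat_into[OF False cC] .
    have es: "e n \<in> sets M" for n using CI rC unfolding I_def null_sets_meas_def by auto
    have UC: "\<Union>C \<in> sets M" using sets.countable_Union[OF cC] CI unfolding I_def null_sets_meas_def by auto
    show ?thesis unfolding I_def null_sets_meas_def
    proof (intro CollectI conjI UC ballI impI)
      fix F assume Fs: "F \<in> sets M" and FC: "F \<subseteq> \<Union>C"
      define A where "A n = F \<inter> disjointed e n" for n
      have rd: "range (disjointed e) \<subseteq> sets M" using es by (intro sets.range_disjointed_sets) auto
      have rA: "range A \<subseteq> sets M" using rd Fs unfolding A_def by auto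
      have dA: "disjoint_family A" using disjoint_family_disjointed[of e] unfolding A_def disjoint_family_on_def by blast
      have "(\<Union>n. A n) = F \<inter> (\<Union>n. e n)" unfolding A_def using UN_disjointed_eq[of e] by blast
      then have UA: "(\<Union>n. A n) = F" using FC rC by blast
      have "\<forall>A. range A \<subseteq> sets M \<longrightarrow> disjoint_family A \<longrightarrow>
         (\<lambda>n. supp_fun f (N (A n))) sums supp_fun f (N (\<Union>n. A n))"
        using sf[OF f] unfolding sf_ext_measure_def by blast
      then have "(\<lambda>n. supp_fun f (N (A n))) sums supp_fun f (N (\<Union>n. A n))" using rA dA by blast
      then have s: "(\<lambda>n. supp_fun f (N (A n))) sums supp_fun f (N F)" using UA by simp
      have A0: "supp_fun f (N (A n)) = 0" for n
      proof -
        have "e n \<in> I f" using CI rC by auto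
        moreover have "A n \<subseteq> e n" using disjointed_subset[of e n] unfolding A_def by auto
        ultimately show ?thesis using rA unfolding I_def null_sets_meas_def by auto
      qed
      have "(\<lambda>n. supp_fun f (N (A n))) = (\<lambda>n. 0)" using A0 by simp
      with s have "(\<lambda>n. 0::ereal) sums supp_fun f (N F)" by simp
      from sums_unique2[OF this sums_zero] show "supp_fun f (N F) = 0" .
    qed
  qed
  have ccc: "countable F" if FS: "F \<subseteq> sets M - (\<Inter>f\<in>dual_space. I f)" and dF: "disjoint F" for F
  proof -
    have "\<exists>G. G \<in> sets M \<and> G \<subseteq> X \<and> G \<noteq> {} \<and> N G \<noteq> {0}" if X: "X \<in> F" for X
    proof -
      from FS X obtain f where f: "f \<in> dual_space" "X \<notin> I f" and Xs: "X \<in> sets M" by auto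
      then obtain G where G: "G \<in> sets M" "G \<subseteq> X" "supp_fun f (N G) \<noteq> 0"
        unfolding I_def null_sets_meas_def by auto
      have "G \<noteq> {}" using G zero[OF f(1)] by auto
      moreover have "N G \<noteq> {0}"
      proof
        assume "N G = {0}"
        moreover have "f 0 = 0" using f(1) unfolding dual_space_def by (auto intro: linear_0)
        ultimately have "supp_fun f (N G) = 0" unfolding supp_fun_def by (simp add: zero_ereal_def)
        with G show False by simp
      qed
      ultimately show ?thesis using G by blast
    qed
    then obtain g where g: "\<And>X. X \<in> F \<Longrightarrow> g X \<in> sets M \<and> g X \<subseteq> X \<and> g X \<noteq> {} \<and> N (g X) \<noteq> {0}"
      by metis
    have inj: "inj_on g F"
    proof (rule inj_onI)
      fix X Y assume XY: "X \<in> F" "Y \<in> F" "g X = g Y"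
      show "X = Y"
      proof (rule ccontr)
        assume "X \<noteq> Y"
        then have "X \<inter> Y = {}" using dF XY unfolding disjoint_def by auto
        with g[OF XY(1)] g[OF XY(2)] XY(3) show False by auto
      qed
    qed
    have "g ` F \<subseteq> sets M - null_sets_mm M N" using g unfolding null_sets_mm_def by auto
    moreover have "disjoint (g ` F)"
      unfolding disjoint_def
    proof (intro ballI impI)
      fix a b assume "a \<in> g ` F" "b \<in> g ` F" "a \<noteq> b"
      then obtain X Y where "X \<in> F" "Y \<in> F" "a = g X" "b = g Y" "X \<noteq> Y" by auto
      then have "a \<subseteq> X" "b \<subseteq> Y" "X \<inter> Y = {}" using g dF unfolding disjoint_def by auto
      then show "a \<inter> b = {}" by blast
    qed
    ultimately have "countable (g ` F)" using assms(2) unfolding countable_chain_condition_def by blast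
    then show ?thesis using countable_image_inj_on inj by blast
  qed
  have "\<exists>A. countable A \<and> A \<subseteq> dual_space \<and> A \<noteq> {} \<and> (\<Inter>\<alpha>\<in>A. I \<alpha>) = (\<Inter>\<alpha>\<in>dual_space. I \<alpha>)"
  proof (rule abstract_ccc[OF Dne])
    show "I f \<subseteq> sets M" for f unfolding I_def null_sets_meas_def by auto
    show "B \<in> I f" if "f \<in> dual_space" "A \<in> I f" "B \<in> sets M" "B \<subseteq> A" for f A B
      using that unfolding I_def null_sets_meas_def by auto
    show "\<Union>C \<in> I f" if "f \<in> dual_space" "countable C" "C \<subseteq> I f" for f C
      using un that by blast
    show "countable F" if "F \<subseteq> sets M - (\<Inter>\<alpha>\<in>dual_space. I \<alpha>)" "disjoint F" for F
      using ccc that by blast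
  qed
  then obtain A where A: "countable A" "A \<subseteq> dual_space" "A \<noteq> {}" "(\<Inter>\<alpha>\<in>A. I \<alpha>) = (\<Inter>\<alpha>\<in>dual_space. I \<alpha>)"
    by blast
  define x' where "x' = from_nat_into A"
  have rx: "range x' = A" unfolding x'_def using range_from_nat_into[OF A(3) A(1)] .
  have "(\<Inter>n. I (x' n)) = (\<Inter>\<alpha>\<in>range x'. I \<alpha>)" by (simp add: image_image)
  then have eq: "(\<Inter>n. I (x' n)) = (\<Inter>\<alpha>\<in>dual_space. I \<alpha>)" using A(4) rx by simp
  have rs: "range x' \<subseteq> dual_space" using rx A(2) by simp
  have eq': "(\<Inter>n. null_sets_meas M (\<lambda>E. supp_fun (x' n) (N E)))
             = (\<Inter>f\<in>dual_space. null_sets_meas M (\<lambda>E. supp_fun f (N E)))"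
    using eq unfolding I_def .
  show ?thesis by (rule exI[of _ x'], rule conjI[OF rs eq'])
qed

end
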